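(* Let $G$ be a group with finite generating set $S$ (with $S=S^{-1}$, $e\notin S$). For $n\ge 3$ let $\sigma=(1\,2\,\cdots\,n)\in\mathrm{Sym}(n)$ and $S_{\rm pos}=\mathrm{Sym}(n)\smallsetminus\{e,\sigma,\sigma^{-1}\}$. Then for all sufficiently large $n$ there is a map $i\colon G\to G\times\mathrm{Sym}(n)$ which is an isometric embedding for the word metrics of $(G,S)$ and $(G\times\mathrm{Sym}(n),S\boxtimes S_{\rm pos})$, such that $\kappa(i(g))>0$ for all $g\in G$ (curvature with respect to $S\boxtimes S_{\rm pos}$), and such that $d(i(gh),i(g)i(h))\le 2$ for all $g,h\in G$.
   Context: For generating sets $S_1,S_2$ of groups $G_1,G_2$, $S_1\boxtimes S_2=(S_1\times\{e\})\cup(\{e\}\times S_2)$ is the split generating set of $G_1\times G_2$. For a group with finite generating set $S$ ($S=S^{-1}$, $e\notin S$), $|x|$ is word length, $d(x,y)=|x^{-1}y|$, $\mathrm{Av}(g)=\frac{1}{|S|}\sum_{a\in S}|a^{-1}ga|$, and for $g\neq e$ the curvature is $\kappa(g)=\frac{|g|-\mathrm{Av}(g)}{|g|}$. *)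

theory Defs
  imports "HOL-Algebra.Algebra"
begin

definition gen_set :: "('a, 'b) monoid_scheme \<Rightarrow> 'a set \<Rightarrow> bool" where
  "gen_set G S \<longleftrightarrow> finite S \<and> S \<subseteq> carrier G \<and> \<one>\<^bsub>G\<^esub> \<notin> S
     \<and> (\<forall>s\<in>S. inv\<^bsub>G\<^esub> s \<in> S) \<and> generate G S = carrier G"

definition word_len :: "('a, 'b) monoid_scheme \<Rightarrow> 'a set \<Rightarrow> 'a \<Rightarrow> nat" where
  "word_len G S x = (LEAST k. \<exists>ws. length ws = k \<and> set ws \<subseteq> S
        \<and> foldr (\<otimes>\<^bsub>G\<^esub>) ws \<one>\<^bsub>G\<^esub> = x)"

definition word_dist :: "('a, 'b) monoid_scheme \<Rightarrow> 'a set \<Rightarrow> 'a \<Rightarrow> 'a \<Rightarrow> nat" where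
  "word_dist G S x y = word_len G S (inv\<^bsub>G\<^esub> x \<otimes>\<^bsub>G\<^esub> y)"

definition avg_conj :: "('a, 'b) monoid_scheme \<Rightarrow> 'a set \<Rightarrow> 'a \<Rightarrow> real" where
  "avg_conj G S g = (\<Sum>a\<in>S. real (word_len G S (inv\<^bsub>G\<^esub> a \<otimes>\<^bsub>G\<^esub> g \<otimes>\<^bsub>G\<^esub> a))) / real (card S)"

text \<open>Curvature; meaningful only for g \<noteq> 1 (for g = 1 the HOL value is 0 since x/0 = 0).\<close>
definition curvature :: "('a, 'b) monoid_scheme \<Rightarrow> 'a set \<Rightarrow> 'a \<Rightarrow> real" where
  "curvature G S g = (real (word_len G S g) - avg_conj G S g) / real (word_len G S g)"

definition split_gen :: "('a, 'c) monoid_scheme \<Rightarrow> 'a set \<Rightarrow> ('b, 'd) monoid_scheme \<Rightarrow> 'b set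
    \<Rightarrow> ('a \<times> 'b) set" where
  "split_gen G S H T = (S \<times> {\<one>\<^bsub>H\<^esub>}) \<union> ({\<one>\<^bsub>G\<^esub>} \<times> T)"

definition ncycle :: "nat \<Rightarrow> nat \<Rightarrow> nat" where
  "ncycle n = (\<lambda>i. if 1 \<le> i \<and> i < n then i + 1 else if i = n then 1 else i)"

definition S_pos :: "nat \<Rightarrow> (nat \<Rightarrow> nat) set" where
  "S_pos n = carrier (sym_group n) - {id, ncycle n, inv\<^bsub>sym_group n\<^esub> (ncycle n)}"

end

theory Submission
  imports Defs
begin


definition wp :: "('a,'b) monoid_scheme \<Rightarrow> 'a list \<Rightarrow> 'a" where
  "wp G ws = foldr (\<otimes>\<^bsub>G\<^esub>) ws \<one>\<^bsub>G\<^esub>"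

lemma wp_Nil[simp]: "wp G [] = \<one>\<^bsub>G\<^esub>" and wp_Cons[simp]: "wp G (x#xs) = x \<otimes>\<^bsub>G\<^esub> wp G xs"
  by (simp_all add: wp_def)

lemma (in monoid) wp_closed: "set ws \<subseteq> carrier G \<Longrightarrow> wp G ws \<in> carrier G"
  by (induct ws) auto

lemma (in monoid) wp_append: "set ws \<subseteq> carrier G \<Longrightarrow> set vs \<subseteq> carrier G \<Longrightarrow>
   wp G (ws @ vs) = wp G ws \<otimes> wp G vs"
  by (induct ws) (auto simp: wp_closed m_assoc)

lemma wl_le: "set ws \<subseteq> S \<Longrightarrow> wp G ws = x \<Longrightarrow> word_len G S x \<le> length ws"
  unfolding word_len_def wp_def by (rule Least_le) auto

lemma wl_ex: "set ws \<subseteq> S \<Longrightarrow> wp G ws = x \<Longrightarrow>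
   \<exists>vs. length vs = word_len G S x \<and> set vs \<subseteq> S \<and> wp G vs = x"
  unfolding word_len_def wp_def by (rule LeastI_ex) auto

lemma (in group) gen_words:
  assumes "S \<subseteq> carrier G" "\<forall>s\<in>S. inv s \<in> S" "x \<in> generate G S"
  shows "\<exists>ws. set ws \<subseteq> S \<and> wp G ws = x"
  using assms(3)
proof (induct rule: generate.induct)
  case one
  then show ?case by (intro exI[of _ "[]"]) auto
next
  case (incl h)
  then show ?case using assms(1) by (intro exI[of _ "[h]"]) auto
next
  case (inv h)
  then show ?case using assms(1,2) by (intro exI[of _ "[inv h]"]) auto
next
  case (eng h1 h2)
  then obtain w1 w2 where "set w1 \<subseteq> S" "wp G w1 = h1" "set w2 \<subseteq> S" "wp G w2 = h2" by blast
  then show ?case using assms(1) by (intro exI[of _ "w1 @ w2"]) (auto simp: wp_append)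
qed

lemma wl_min:
  assumes "group G" "gen_set G S" "x \<in> carrier G"
  shows "\<exists>vs. length vs = word_len G S x \<and> set vs \<subseteq> S \<and> wp G vs = x"
proof -
  have "\<exists>ws. set ws \<subseteq> S \<and> wp G ws = x"
    using group.gen_words[OF assms(1), of S x] assms(2,3) unfolding gen_set_def by auto
  then show ?thesis using wl_ex by metis
qed

lemma prod_upper:
  assumes "monoid G" "monoid H" "set w1 \<subseteq> S" "set w2 \<subseteq> U" "S \<subseteq> carrier G" "U \<subseteq> carrier H"
  shows "set (map (\<lambda>s. (s, \<one>\<^bsub>H\<^esub>)) w1 @ map (\<lambda>u. (\<one>\<^bsub>G\<^esub>, u)) w2) \<subseteq> split_gen G S H U"
    and "wp (G \<times>\<times> H) (map (\<lambda>s. (s, \<one>\<^bsub>H\<^esub>)) w1 @ map (\<lambda>u. (\<one>\<^bsub>G\<^esub>, u)) w2) = (wp G w1, wp H w2)"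
proof -
  show "set (map (\<lambda>s. (s, \<one>\<^bsub>H\<^esub>)) w1 @ map (\<lambda>u. (\<one>\<^bsub>G\<^esub>, u)) w2) \<subseteq> split_gen G S H U"
    using assms(3,4) unfolding split_gen_def by auto
  interpret G: monoid G by fact
  interpret H: monoid H by fact
  have w2: "wp (G \<times>\<times> H) (map (\<lambda>u. (\<one>\<^bsub>G\<^esub>, u)) w2) = (\<one>\<^bsub>G\<^esub>, wp H w2)"
    using assms(4,6) by (induct w2) (auto simp: H.wp_closed)
  show "wp (G \<times>\<times> H) (map (\<lambda>s. (s, \<one>\<^bsub>H\<^esub>)) w1 @ map (\<lambda>u. (\<one>\<^bsub>G\<^esub>, u)) w2) = (wp G w1, wp H w2)"
    using assms(3,5) H.wp_closed[of w2] assms(4,6) by (induct w1) (auto simp: w2 G.wp_closed)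
qed

lemma prod_upper_len:
  assumes "monoid G" "monoid H" "set w1 \<subseteq> S" "set w2 \<subseteq> U" "S \<subseteq> carrier G" "U \<subseteq> carrier H"
  shows "word_len (G \<times>\<times> H) (split_gen G S H U) (wp G w1, wp H w2) \<le> length w1 + length w2"
  using wl_le[OF prod_upper[OF assms]] by simp

lemma prod_proj:
  assumes "monoid G" "monoid H" "set ws \<subseteq> split_gen G S H U" "S \<subseteq> carrier G" "U \<subseteq> carrier H"
    "\<one>\<^bsub>G\<^esub> \<notin> S" "\<one>\<^bsub>H\<^esub> \<notin> U"
  shows "set (map fst (filter (\<lambda>t. snd t = \<one>\<^bsub>H\<^esub>) ws)) \<subseteq> S"
    "set (map snd (filter (\<lambda>t. snd t \<noteq> \<one>\<^bsub>H\<^esub>) ws)) \<subseteq> U"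
    "wp (G \<times>\<times> H) ws = (wp G (map fst (filter (\<lambda>t. snd t = \<one>\<^bsub>H\<^esub>) ws)),
                        wp H (map snd (filter (\<lambda>t. snd t \<noteq> \<one>\<^bsub>H\<^esub>) ws)))"
proof -
  show "set (map fst (filter (\<lambda>t. snd t = \<one>\<^bsub>H\<^esub>) ws)) \<subseteq> S"
    "set (map snd (filter (\<lambda>t. snd t \<noteq> \<one>\<^bsub>H\<^esub>) ws)) \<subseteq> U"
    using assms(3,7) unfolding split_gen_def by auto
  interpret G: monoid G by fact
  interpret H: monoid H by fact
  show "wp (G \<times>\<times> H) ws = (wp G (map fst (filter (\<lambda>t. snd t = \<one>\<^bsub>H\<^esub>) ws)),
                        wp H (map snd (filter (\<lambda>t. snd t \<noteq> \<one>\<^bsub>H\<^esub>) ws)))"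
    using assms(3)
  proof (induct ws)
    case Nil
    then show ?case by simp
  next
    case (Cons t ws)
    have sub: "set (map fst (filter (\<lambda>t. snd t = \<one>\<^bsub>H\<^esub>) ws)) \<subseteq> carrier G"
      "set (map snd (filter (\<lambda>t. snd t \<noteq> \<one>\<^bsub>H\<^esub>) ws)) \<subseteq> carrier H"
      using Cons(2) assms(4,5) G.one_closed H.one_closed unfolding split_gen_def by (force simp: subset_iff)+
    have IH: "wp (G \<times>\<times> H) ws = (wp G (map fst (filter (\<lambda>t. snd t = \<one>\<^bsub>H\<^esub>) ws)),
                        wp H (map snd (filter (\<lambda>t. snd t \<noteq> \<one>\<^bsub>H\<^esub>) ws)))"
      using Cons by auto
    note cA = G.wp_closed[OF sub(1)] and cB = H.wp_closed[OF sub(2)]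
    have "t \<in> split_gen G S H U" using Cons(2) by auto
    then consider (a) s where "s \<in> S" "t = (s, \<one>\<^bsub>H\<^esub>)" | (b) u where "u \<in> U" "t = (\<one>\<^bsub>G\<^esub>, u)"
      unfolding split_gen_def by auto
    then show ?case
    proof cases
      case a
      then show ?thesis by (simp add: IH cB)
    next
      case b
      then show ?thesis using assms(7) \<open>u \<in> U\<close> by (auto simp add: IH cA)
    qed
  qed
qed

lemma prod_lower:
  assumes "monoid G" "monoid H" "set ws \<subseteq> split_gen G S H U" "wp (G \<times>\<times> H) ws = (x, p)"
    "S \<subseteq> carrier G" "U \<subseteq> carrier H" "\<one>\<^bsub>G\<^esub> \<notin> S" "\<one>\<^bsub>H\<^esub> \<notin> U"
  shows "word_len G S x + word_len H U p \<le> word_len (G \<times>\<times> H) (split_gen G S H U) (x, p)"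
proof -
  obtain vs where vs: "length vs = word_len (G \<times>\<times> H) (split_gen G S H U) (x, p)"
    "set vs \<subseteq> split_gen G S H U" "wp (G \<times>\<times> H) vs = (x, p)"
    using wl_ex[OF assms(3,4)] by blast
  note P = prod_proj[OF assms(1,2) vs(2) assms(5-8)]
  have "word_len G S x \<le> length (map fst (filter (\<lambda>t. snd t = \<one>\<^bsub>H\<^esub>) vs))"
    using wl_le[OF P(1)] P(3) vs(3) by simp
  moreover have "word_len H U p \<le> length (map snd (filter (\<lambda>t. snd t \<noteq> \<one>\<^bsub>H\<^esub>) vs))"
    using wl_le[OF P(2)] P(3) vs(3) by simp
  moreover have "length (filter (\<lambda>t. snd t = \<one>\<^bsub>H\<^esub>) vs) + length (filter (\<lambda>t. snd t \<noteq> \<one>\<^bsub>H\<^esub>) vs) = length vs"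
    by (rule sum_length_filter_compl)
  ultimately show ?thesis using vs(1) by simp
qed



lemma ncycle_simps:
  "1 \<le> j \<Longrightarrow> j < n \<Longrightarrow> ncycle n j = Suc j"
  "1 \<le> n \<Longrightarrow> ncycle n n = 1"
  "1 \<le> n \<Longrightarrow> j \<notin> {1..n} \<Longrightarrow> ncycle n j = j"
  unfolding ncycle_def by auto

lemma ncycle_permutes: "1 \<le> n \<Longrightarrow> ncycle n permutes {1..n}"
proof (rule bij_imp_permutes)
  assume n: "1 \<le> n"
  show "ncycle n x = x" if "x \<notin> {1..n}" for x using that n by (simp add: ncycle_simps)
  have inj: "inj_on (ncycle n) {1..n}"
    unfolding inj_on_def ncycle_def by auto
  have img: "ncycle n ` {1..n} \<subseteq> {1..n}"
    unfolding ncycle_def by auto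
  show "bij_betw (ncycle n) {1..n} {1..n}"
    unfolding bij_betw_def using inj endo_inj_surj[OF _ img inj] by simp
qed

lemma agree_upto:
  assumes "\<And>j. 1 \<le> j \<Longrightarrow> j < n \<Longrightarrow> a j = b j \<Longrightarrow> a (Suc j) = b (Suc j)" "a 1 = b 1"
  shows "1 \<le> j \<Longrightarrow> j \<le> n \<Longrightarrow> a j = b j"
proof (induct j)
  case 0 then show ?case by simp
next
  case (Suc j)
  show ?case
  proof (cases "j = 0")
    case True then show ?thesis using assms(2) by simp
  next
    case False then show ?thesis using Suc assms(1)[of j] by simp
  qed
qed

lemma perm_eq_by_1:
  assumes "a permutes {1..n}" "b permutes {1..n}" "a 1 = b 1"
    "\<And>j. 1 \<le> j \<Longrightarrow> j < n \<Longrightarrow> a j = b j \<Longrightarrow> a (Suc j) = b (Suc j)"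
  shows "a = b"
proof
  fix x
  show "a x = b x"
  proof (cases "x \<in> {1..n}")
    case True then show ?thesis using agree_upto[of n a b x] assms(3,4) by auto
  next
    case False then show ?thesis using assms(1,2) by (simp add: permutes_not_in)
  qed
qed

lemma card_by_1:
  assumes "A \<subseteq> {a. a permutes {1..n}}"
    "\<And>a b. a \<in> A \<Longrightarrow> b \<in> A \<Longrightarrow> a 1 = b 1 \<Longrightarrow> a = b"
    "1 \<le> n"
  shows "card A \<le> n"
proof -
  have "card A \<le> card {1..n}"
  proof (rule card_inj_on_le[of "\<lambda>a. a 1"])
    show "inj_on (\<lambda>a. a 1) A" using assms(2) unfolding inj_on_def by blast
    show "(\<lambda>a. a 1) ` A \<subseteq> {1..n}" using assms(1,3) permutes_in_image by fastforce
  qed auto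
  then show ?thesis by simp
qed

lemma card_centr:
  assumes "1 \<le> n"
  shows "card {a \<in> carrier (sym_group n). ncycle n \<circ> a = a \<circ> ncycle n} \<le> n"
proof (rule card_by_1[OF _ _ assms])
  show "{a \<in> carrier (sym_group n). ncycle n \<circ> a = a \<circ> ncycle n} \<subseteq> {a. a permutes {1..n}}"
    by (auto simp: sym_group_carrier)
  fix a b assume a: "a \<in> {a \<in> carrier (sym_group n). ncycle n \<circ> a = a \<circ> ncycle n}"
    and b: "b \<in> {a \<in> carrier (sym_group n). ncycle n \<circ> a = a \<circ> ncycle n}" and 1: "a 1 = b 1"
  show "a = b"
  proof (rule perm_eq_by_1[of a n b])
    show "a 1 = b 1" by (rule 1)
    show "a permutes {1..n}" "b permutes {1..n}" using a b by (auto simp: sym_group_carrier)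
    fix j assume j: "1 \<le> j" "j < n" "a j = b j"
    have "a (Suc j) = ncycle n (a j)" using a j ncycle_simps(1)[of j n]
      by (metis (mono_tags, lifting) comp_apply mem_Collect_eq)
    moreover have "b (Suc j) = ncycle n (b j)" using b j ncycle_simps(1)[of j n]
      by (metis (mono_tags, lifting) comp_apply mem_Collect_eq)
    ultimately show "a (Suc j) = b (Suc j)" using j by simp
  qed
qed

lemma card_anti:
  assumes "1 \<le> n"
  shows "card {a \<in> carrier (sym_group n). ncycle n \<circ> a \<circ> ncycle n = a} \<le> n"
proof (rule card_by_1[OF _ _ assms])
  show "{a \<in> carrier (sym_group n). ncycle n \<circ> a \<circ> ncycle n = a} \<subseteq> {a. a permutes {1..n}}"
    by (auto simp: sym_group_carrier)
  fix a b assume a: "a \<in> {a \<in> carrier (sym_group n). ncycle n \<circ> a \<circ> ncycle n = a}"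
    and b: "b \<in> {a \<in> carrier (sym_group n). ncycle n \<circ> a \<circ> ncycle n = a}" and 1: "a 1 = b 1"
  show "a = b"
  proof (rule perm_eq_by_1[of a n b])
    show "a 1 = b 1" by (rule 1)
    show "a permutes {1..n}" "b permutes {1..n}" using a b by (auto simp: sym_group_carrier)
    fix j assume j: "1 \<le> j" "j < n" "a j = b j"
    have "a j = ncycle n (a (Suc j))" using a j ncycle_simps(1)[of j n]
      by (metis (mono_tags, lifting) comp_apply mem_Collect_eq)
    moreover have "b j = ncycle n (b (Suc j))" using b j ncycle_simps(1)[of j n]
      by (metis (mono_tags, lifting) comp_apply mem_Collect_eq)
    ultimately show "a (Suc j) = b (Suc j)" using j permutes_inj[OF ncycle_permutes[of n]] assms
      by (metis injD)
  qed
qed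

lemma card_carrier_sym: "card (carrier (sym_group n)) = fact n"
  "finite (carrier (sym_group n))"
  unfolding sym_group_def by (auto simp: card_permutations finite_permutations)

lemma ncycle_carrier: "1 \<le> n \<Longrightarrow> ncycle n \<in> carrier (sym_group n)"
  unfolding sym_group_carrier by (rule ncycle_permutes)

lemma ncycle_ne_id: "2 \<le> n \<Longrightarrow> ncycle n \<noteq> id"
  using ncycle_simps(1)[of 1 n] by (metis One_nat_def id_apply n_not_Suc_n numeral_2_eq_2 le_refl
    Suc_le_lessD)

lemma card_S_pos: "fact n - 3 \<le> card (S_pos n)" "finite (S_pos n)"
proof -
  have "card (carrier (sym_group n)) - card {id, ncycle n, inv\<^bsub>sym_group n\<^esub> (ncycle n)} \<le> card (S_pos n)"
    unfolding S_pos_def by (rule diff_card_le_card_Diff) (simp add: card_carrier_sym)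
  moreover have "card {id, ncycle n, inv\<^bsub>sym_group n\<^esub> (ncycle n)} \<le> 3"
    using card_length[of "[id, ncycle n, inv\<^bsub>sym_group n\<^esub> (ncycle n)]"] by simp
  ultimately show "fact n - 3 \<le> card (S_pos n)" by (simp add: card_carrier_sym)
  show "finite (S_pos n)" unfolding S_pos_def by (simp add: card_carrier_sym)
qed

definition tr :: "nat \<Rightarrow> nat" where "tr = Transposition.transpose 1 2"

lemma tr_facts:
  assumes "3 \<le> n"
  shows "tr \<in> S_pos n" "tr \<circ> ncycle n \<in> S_pos n" "tr \<circ> (tr \<circ> ncycle n) = ncycle n"
proof -
  interpret H: group "sym_group n" by (rule sym_group_is_group)
  have n1: "1 \<le> n" using assms by simp
  have c1: "ncycle n 1 = 2" and c2: "ncycle n 2 = 3" using assms ncycle_simps(1)[of 1 n] ncycle_simps(1)[of 2 n] by auto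
  have trp: "tr \<in> carrier (sym_group n)" unfolding tr_def sym_group_carrier
    using assms by (intro permutes_swap_id) auto
  have trc: "tr \<circ> ncycle n \<in> carrier (sym_group n)"
    using H.m_closed[OF trp ncycle_carrier[OF n1]] by (simp add: sym_group_mult)
  have inv_ne: "x \<noteq> inv\<^bsub>sym_group n\<^esub> (ncycle n)" if "x \<in> carrier (sym_group n)" "ncycle n (x 1) \<noteq> 1" for x
  proof
    assume "x = inv\<^bsub>sym_group n\<^esub> (ncycle n)"
    then have "ncycle n \<otimes>\<^bsub>sym_group n\<^esub> x = \<one>\<^bsub>sym_group n\<^esub>"
      using H.r_inv[OF ncycle_carrier[OF n1]] by simp
    then have "ncycle n \<circ> x = id" by (simp add: sym_group_mult sym_group_one)
    then have "ncycle n (x 1) = 1" by (metis comp_apply id_apply)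
    then show False using that by simp
  qed
  have t1: "tr 1 = 2" "tr 2 = 1" unfolding tr_def by auto
  have t3: "tr 3 = 3" unfolding tr_def by simp
  have a1: "tr \<noteq> id" using t1 by (metis id_apply n_not_Suc_n numeral_2_eq_2 One_nat_def)
  have a2: "tr \<noteq> ncycle n"
  proof
    assume "tr = ncycle n" then have "tr 2 = ncycle n 2" by simp
    then show False using t1 c2 by simp
  qed
  have a3: "tr \<noteq> inv\<^bsub>sym_group n\<^esub> (ncycle n)" using inv_ne[OF trp] t1 c2 by simp
  show "tr \<in> S_pos n" unfolding S_pos_def using trp a1 a2 a3 by auto
  have b1: "tr \<circ> ncycle n \<noteq> id" using c2 t3
    by (metis comp_apply id_apply n_not_Suc_n numeral_2_eq_2 numeral_3_eq_3)
  have b2: "tr \<circ> ncycle n \<noteq> ncycle n" using c1 t1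
    by (metis comp_apply n_not_Suc_n numeral_2_eq_2 One_nat_def)
  have b3: "tr \<circ> ncycle n \<noteq> inv\<^bsub>sym_group n\<^esub> (ncycle n)" using inv_ne[OF trc] t1 c1 by simp
  show "tr \<circ> ncycle n \<in> S_pos n" unfolding S_pos_def using trc b1 b2 b3 by auto
  show "tr \<circ> (tr \<circ> ncycle n) = ncycle n" unfolding tr_def by (simp add: fun_eq_iff)
qed



lemma (in group) conj_facts:
  assumes "a \<in> carrier G" "s \<in> carrier G"
  shows "inv a \<otimes> s \<otimes> a = s \<Longrightarrow> s \<otimes> a = a \<otimes> s"
    and "inv a \<otimes> s \<otimes> a = inv s \<Longrightarrow> s \<otimes> a \<otimes> s = a"
    and "inv a \<otimes> s \<otimes> a = \<one> \<Longrightarrow> s = \<one>"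
proof -
  have key: "a \<otimes> (inv a \<otimes> s \<otimes> a) = s \<otimes> a" using assms by (simp add: m_assoc[symmetric])
  show "inv a \<otimes> s \<otimes> a = s \<Longrightarrow> s \<otimes> a = a \<otimes> s" using key by simp
  show "inv a \<otimes> s \<otimes> a = inv s \<Longrightarrow> s \<otimes> a \<otimes> s = a"
  proof -
    assume "inv a \<otimes> s \<otimes> a = inv s"
    then have "a \<otimes> inv s = s \<otimes> a" using key by simp
    then have "a \<otimes> inv s \<otimes> s = s \<otimes> a \<otimes> s" by simp
    then show ?thesis using assms by (simp add: m_assoc)
  qed
  show "inv a \<otimes> s \<otimes> a = \<one> \<Longrightarrow> s = \<one>"
  proof -
    assume "inv a \<otimes> s \<otimes> a = \<one>"
    then have "\<one> \<otimes> a = s \<otimes> a" using key assms by simp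
    then show ?thesis using assms by (metis one_closed r_cancel)
  qed
qed

lemma fact_big: "10 \<le> n \<Longrightarrow> 7 * n < fact n + (7::nat)"
proof -
  assume n: "10 \<le> n"
  have "(fact n::nat) = n * fact (n - 1)" using n fact_reduce[of n, where 'a=nat] by simp
  moreover have "n - 1 \<le> (fact (n - 1)::nat)" by (rule fact_ge_self)
  ultimately have "n * (n - 1) \<le> (fact n::nat)" by simp
  moreover have "9 * (n - 1) \<le> n * (n - 1)" using n by simp
  ultimately show ?thesis using n by linarith
qed



theorem mainTheorem10:
  fixes G :: "'a monoid" and S :: "'a set"
  assumes "group G" and "gen_set G S"
  shows "\<exists>N. \<forall>n\<ge>N. \<exists>i. (\<forall>g\<in>carrier G. i g \<in> carrier (G \<times>\<times> sym_group n))
      \<and> (\<forall>g\<in>carrier G. \<forall>h\<in>carrier G.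
            word_dist (G \<times>\<times> sym_group n) (split_gen G S (sym_group n) (S_pos n)) (i g) (i h)
              = word_dist G S g h)
      \<and> (\<forall>g\<in>carrier G. i g \<noteq> \<one>\<^bsub>G \<times>\<times> sym_group n\<^esub>
            \<and> curvature (G \<times>\<times> sym_group n) (split_gen G S (sym_group n) (S_pos n)) (i g) > 0)
      \<and> (\<forall>g\<in>carrier G. \<forall>h\<in>carrier G.
            word_dist (G \<times>\<times> sym_group n) (split_gen G S (sym_group n) (S_pos n))
               (i (g \<otimes>\<^bsub>G\<^esub> h)) (i g \<otimes>\<^bsub>G \<times>\<times> sym_group n\<^esub> i h) \<le> 2)"
proof -
  interpret G: group G by fact
  have gs: "finite S" "S \<subseteq> carrier G" "\<one>\<^bsub>G\<^esub> \<notin> S" "\<And>s. s \<in> S \<Longrightarrow> inv\<^bsub>G\<^esub> s \<in> S"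
    using assms(2) unfolding gen_set_def by auto
  define k where "k = card S"
  show ?thesis
  proof (intro exI[of _ "2*k+10"] allI impI)
    fix n :: nat assume nN: "2*k+10 \<le> n"
    let ?H = "sym_group n"
    let ?P = "G \<times>\<times> sym_group n"
    let ?T = "split_gen G S (sym_group n) (S_pos n)"
    let ?U = "S_pos n"
    define \<sigma> where "\<sigma> = ncycle n"
    interpret H: group "sym_group n" by (rule sym_group_is_group)
    have n1: "1 \<le> n" "3 \<le> n" "10 \<le> n" using nN by auto
    have \<sigma>c: "\<sigma> \<in> carrier ?H" using ncycle_carrier[OF n1(1)] \<sigma>_def by simp
    have Hone: "\<one>\<^bsub>?H\<^esub> = id" by (simp add: sym_group_one)
    have Hmult: "\<And>x y. x \<otimes>\<^bsub>?H\<^esub> y = x \<circ> y" by (simp add: sym_group_mult)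
    have Usub: "?U \<subseteq> carrier ?H" "\<one>\<^bsub>?H\<^esub> \<notin> ?U" unfolding S_pos_def by (auto simp: sym_group_one)
    have \<sigma>U: "\<sigma> \<notin> ?U" unfolding S_pos_def \<sigma>_def by auto
    have \<sigma>1: "\<sigma> \<noteq> \<one>\<^bsub>?H\<^esub>" using ncycle_ne_id[of n] n1 \<sigma>_def Hone by auto
    have invU: "inv\<^bsub>?H\<^esub> a \<in> ?U" if a: "a \<in> ?U" for a
    proof -
      have ac: "a \<in> carrier ?H" "a \<noteq> \<one>\<^bsub>?H\<^esub>" "a \<noteq> ncycle n" "a \<noteq> inv\<^bsub>?H\<^esub> (ncycle n)"
        using a unfolding S_pos_def by (auto simp: Hone)
      have nc: "ncycle n \<in> carrier ?H" using \<sigma>c \<sigma>_def by simp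
      have "inv\<^bsub>?H\<^esub> a \<noteq> \<one>\<^bsub>?H\<^esub>" using ac by (metis H.inv_inv H.inv_one)
      moreover have "inv\<^bsub>?H\<^esub> a \<noteq> ncycle n" using ac nc by (metis H.inv_inv)
      moreover have "inv\<^bsub>?H\<^esub> a \<noteq> inv\<^bsub>?H\<^esub> (ncycle n)" using ac nc by (metis H.inv_inv)
      ultimately show ?thesis using ac H.inv_closed[OF ac(1)] unfolding S_pos_def by (auto simp: Hone)
    qed
    note trf = tr_facts[OF n1(2), folded \<sigma>_def]
    define w\<sigma> where "w\<sigma> = [tr, tr \<circ> \<sigma>]"
    have w\<sigma>: "set w\<sigma> \<subseteq> ?U" "wp ?H w\<sigma> = \<sigma>" "length w\<sigma> = 2"
      using trf unfolding w\<sigma>_def by (auto simp: Hone Hmult)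
    have mG: "monoid G" and mH: "monoid ?H" by unfold_locales
    have up: "word_len ?P ?T (wp G w1, wp ?H w2) \<le> length w1 + length w2"
      if "set w1 \<subseteq> S" "set w2 \<subseteq> ?U" for w1 w2
      by (rule prod_upper_len[OF mG mH that gs(2) Usub(1)])
    have lo: "word_len G S (wp G w1) + word_len ?H ?U (wp ?H w2) \<le> word_len ?P ?T (wp G w1, wp ?H w2)"
      if "set w1 \<subseteq> S" "set w2 \<subseteq> ?U" for w1 w2
      by (rule prod_lower[OF mG mH prod_upper(1)[OF mG mH that gs(2) Usub(1)]
          prod_upper(2)[OF mG mH that gs(2) Usub(1)] gs(2) Usub(1) gs(3) Usub(2)])
    have L\<sigma>: "2 \<le> word_len ?H ?U \<sigma>"
    proof -
      obtain vs where vs: "length vs = word_len ?H ?U \<sigma>" "set vs \<subseteq> ?U" "wp ?H vs = \<sigma>"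
        using wl_ex[OF w\<sigma>(1,2)] by blast
      show ?thesis
      proof (cases vs)
        case Nil then show ?thesis using vs \<sigma>1 by simp
      next
        case (Cons v vs')
        show ?thesis
        proof (cases vs')
          case Nil
          then have "\<sigma> = v" "v \<in> ?U" using vs Cons Usub(1) by auto
          then show ?thesis using \<sigma>U by simp
        next
          case (Cons v' vs'')
          then show ?thesis using vs \<open>vs = v # vs'\<close> by simp
        qed
      qed
    qed
    define i where "i = (\<lambda>g::'a. (g, \<sigma>))"
    show "\<exists>i. (\<forall>g\<in>carrier G. i g \<in> carrier ?P)
      \<and> (\<forall>g\<in>carrier G. \<forall>h\<in>carrier G. word_dist ?P ?T (i g) (i h) = word_dist G S g h)
      \<and> (\<forall>g\<in>carrier G. i g \<noteq> \<one>\<^bsub>?P\<^esub> \<and> curvature ?P ?T (i g) > 0)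
      \<and> (\<forall>g\<in>carrier G. \<forall>h\<in>carrier G.
            word_dist ?P ?T (i (g \<otimes>\<^bsub>G\<^esub> h)) (i g \<otimes>\<^bsub>?P\<^esub> i h) \<le> 2)"
    proof (rule exI[of _ i], intro conjI ballI)
      fix g assume g: "g \<in> carrier G"
      show "i g \<in> carrier ?P" using g \<sigma>c by (simp add: i_def)
      show "i g \<noteq> \<one>\<^bsub>?P\<^esub>" using \<sigma>1 by (simp add: i_def)
      show "0 < curvature ?P ?T (i g)"
      proof -
        obtain w where w: "length w = word_len G S g" "set w \<subseteq> S" "wp G w = g"
          using wl_min[OF assms g] by auto
        define L where "L = word_len G S g"
        have W: "L + 2 \<le> word_len ?P ?T (i g)"
          using lo[OF w(2) w\<sigma>(1)] w(3) w\<sigma>(2) L\<sigma> unfolding i_def L_def by simp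
        define f where "f t = word_len ?P ?T (inv\<^bsub>?P\<^esub> t \<otimes>\<^bsub>?P\<^esub> i g \<otimes>\<^bsub>?P\<^esub> t)" for t
        have wG: "set w \<subseteq> carrier G" using w(2) gs(2) by auto
        have f1: "f (s, \<one>\<^bsub>?H\<^esub>) \<le> L + 4" if s: "s \<in> S" for s
        proof -
          have sc: "s \<in> carrier G" using s gs(2) by auto
          have "wp G (inv\<^bsub>G\<^esub> s # w @ [s]) = inv\<^bsub>G\<^esub> s \<otimes>\<^bsub>G\<^esub> g \<otimes>\<^bsub>G\<^esub> s"
            using sc wG w(3) g by (simp add: G.wp_append G.m_assoc G.wp_closed)
          then have eq: "inv\<^bsub>?P\<^esub> (s, \<one>\<^bsub>?H\<^esub>) \<otimes>\<^bsub>?P\<^esub> i g \<otimes>\<^bsub>?P\<^esub> (s, \<one>\<^bsub>?H\<^esub>)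
              = (wp G (inv\<^bsub>G\<^esub> s # w @ [s]), wp ?H w\<sigma>)"
            using sc \<sigma>c w\<sigma>(2) g by (simp add: i_def inv_DirProd[OF assms(1) sym_group_is_group] del: wp_Cons)
          have "set (inv\<^bsub>G\<^esub> s # w @ [s]) \<subseteq> S" using s w(2) gs(4) by auto
          from up[OF this w\<sigma>(1)] show ?thesis unfolding f_def eq using w(1) w\<sigma>(3) L_def by simp
        qed
        define Bad where "Bad = {a \<in> ?U. inv\<^bsub>?H\<^esub> a \<otimes>\<^bsub>?H\<^esub> \<sigma> \<otimes>\<^bsub>?H\<^esub> a \<notin> ?U}"
        have f2: "f (\<one>\<^bsub>G\<^esub>, a) \<le> L + 1 + (if a \<in> Bad then 3 else 0)" if a: "a \<in> ?U" for a
        proof -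
          have ac: "a \<in> carrier ?H" using a Usub by auto
          have eq: "inv\<^bsub>?P\<^esub> (\<one>\<^bsub>G\<^esub>, a) \<otimes>\<^bsub>?P\<^esub> i g \<otimes>\<^bsub>?P\<^esub> (\<one>\<^bsub>G\<^esub>, a)
              = (wp G w, inv\<^bsub>?H\<^esub> a \<otimes>\<^bsub>?H\<^esub> \<sigma> \<otimes>\<^bsub>?H\<^esub> a)"
            using ac \<sigma>c g w(3) by (simp add: i_def inv_DirProd[OF assms(1) sym_group_is_group])
          show ?thesis
          proof (cases "a \<in> Bad")
            case False
            then have cU: "inv\<^bsub>?H\<^esub> a \<otimes>\<^bsub>?H\<^esub> \<sigma> \<otimes>\<^bsub>?H\<^esub> a \<in> ?U" using a Bad_def by auto
            then have "wp ?H [inv\<^bsub>?H\<^esub> a \<otimes>\<^bsub>?H\<^esub> \<sigma> \<otimes>\<^bsub>?H\<^esub> a] = inv\<^bsub>?H\<^esub> a \<otimes>\<^bsub>?H\<^esub> \<sigma> \<otimes>\<^bsub>?H\<^esub> a"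
              using Usub by auto
            then show ?thesis using up[OF w(2), of "[inv\<^bsub>?H\<^esub> a \<otimes>\<^bsub>?H\<^esub> \<sigma> \<otimes>\<^bsub>?H\<^esub> a]"] cU False
              unfolding f_def eq using w(1) L_def by simp
          next
            case True
            have ws: "set (inv\<^bsub>?H\<^esub> a # w\<sigma> @ [a]) \<subseteq> ?U" using invU[OF a] a w\<sigma>(1) by auto
            have "wp ?H (inv\<^bsub>?H\<^esub> a # w\<sigma> @ [a]) = inv\<^bsub>?H\<^esub> a \<otimes>\<^bsub>?H\<^esub> \<sigma> \<otimes>\<^bsub>?H\<^esub> a"
              using ac w\<sigma> Usub \<sigma>c by (simp add: H.wp_append H.m_assoc H.inv_closed[OF ac] H.wp_closed del: sym_group_inv_equality)
            then show ?thesis using up[OF w(2) ws] True w\<sigma>(3)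
              unfolding f_def eq using w(1) L_def by simp
          qed
        qed
        define C1 where "C1 = {a \<in> carrier (sym_group n). ncycle n \<circ> a = a \<circ> ncycle n}"
        define C2 where "C2 = {a \<in> carrier (sym_group n). ncycle n \<circ> a \<circ> ncycle n = a}"
        have BadC: "Bad \<subseteq> C1 \<union> C2"
        proof
          fix a assume aB: "a \<in> Bad"
          then have a: "a \<in> ?U" and ac: "a \<in> carrier ?H" using Bad_def Usub by auto
          have cc: "inv\<^bsub>?H\<^esub> a \<otimes>\<^bsub>?H\<^esub> \<sigma> \<otimes>\<^bsub>?H\<^esub> a \<in> carrier ?H" using ac \<sigma>c H.inv_closed[OF ac] by (simp del: sym_group_inv_equality)
          then have "inv\<^bsub>?H\<^esub> a \<otimes>\<^bsub>?H\<^esub> \<sigma> \<otimes>\<^bsub>?H\<^esub> a \<in> {\<one>\<^bsub>?H\<^esub>, \<sigma>, inv\<^bsub>?H\<^esub> \<sigma>}"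
            using aB unfolding Bad_def S_pos_def \<sigma>_def by (auto simp: Hone)
          then show "a \<in> C1 \<union> C2"
            using H.conj_facts[OF ac \<sigma>c] \<sigma>1 ac unfolding C1_def C2_def \<sigma>_def[symmetric]
            by (auto simp: Hmult)
        qed
        have finH: "finite (carrier ?H)" by (rule card_carrier_sym(2))
        have cardBad: "card Bad \<le> 2 * n"
        proof -
          have "card Bad \<le> card (C1 \<union> C2)"
            by (rule card_mono[OF _ BadC]) (use finH in \<open>auto simp: C1_def C2_def\<close>)
          also have "\<dots> \<le> card C1 + card C2" by (rule card_Un_le)
          also have "\<dots> \<le> n + n" using card_centr[OF n1(1)] card_anti[OF n1(1)]
            unfolding C1_def C2_def by linarith
          finally show ?thesis by simp
        qed
        have Teq: "?T = S \<times> {\<one>\<^bsub>?H\<^esub>} \<union> {\<one>\<^bsub>G\<^esub>} \<times> ?U" unfolding split_gen_def by simp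
        have disj: "S \<times> {\<one>\<^bsub>?H\<^esub>} \<inter> {\<one>\<^bsub>G\<^esub>} \<times> ?U = {}" using gs(3) by auto
        have finU: "finite ?U" by (rule card_S_pos(2))
        define m where "m = card ?U"
        have cardT: "card ?T = k + m"
          unfolding Teq using gs(1) finU disj
          by (simp add: card_Un_disjoint card_cartesian_product card_cartesian_product_singleton k_def m_def)
        have s1: "sum f (S \<times> {\<one>\<^bsub>?H\<^esub>}) \<le> k * (L + 4)"
        proof -
          have b: "\<And>t. t \<in> S \<times> {\<one>\<^bsub>?H\<^esub>} \<Longrightarrow> f t \<le> L + 4" using f1 by auto
          have "sum f (S \<times> {\<one>\<^bsub>?H\<^esub>}) \<le> card (S \<times> {\<one>\<^bsub>?H\<^esub>}) * (L + 4)"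
            using sum_bounded_above[OF b] by simp
          then show ?thesis by (simp add: card_cartesian_product k_def)
        qed
        have s2: "sum f ({\<one>\<^bsub>G\<^esub>} \<times> ?U) \<le> m * (L + 1) + 3 * card Bad"
        proof -
          have im: "{\<one>\<^bsub>G\<^esub>} \<times> ?U = Pair \<one>\<^bsub>G\<^esub> ` ?U" by auto
          have "sum f ({\<one>\<^bsub>G\<^esub>} \<times> ?U) = (\<Sum>a\<in>?U. f (\<one>\<^bsub>G\<^esub>, a))"
            unfolding im by (subst sum.reindex) (auto simp: inj_on_def)
          also have "\<dots> \<le> (\<Sum>a\<in>?U. (L + 1) + (if a \<in> Bad then 3 else 0))"
            by (rule sum_mono) (rule f2)
          also have "\<dots> = m * (L + 1) + (\<Sum>a\<in>?U. (if a \<in> Bad then 3 else 0))"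
            by (subst sum.distrib) (simp add: m_def)
          also have "(\<Sum>a\<in>?U. (if a \<in> Bad then 3 else 0)) = (\<Sum>a\<in>Bad. (3::nat))"
            using finU by (simp add: sum.If_cases Bad_def Int_def)
          finally show ?thesis by simp
        qed
        have sumT: "sum f ?T \<le> k * (L + 4) + (m * (L + 1) + 3 * card Bad)"
          unfolding Teq using sum.union_disjoint[OF _ _ disj, of f] gs(1) finU s1 s2 by simp
        have mbig: "fact n \<le> m + 3" using card_S_pos(1)[of n] unfolding m_def by linarith
        have fb: "7 * n < fact n + 7" by (rule fact_big[OF n1(3)])
        have e1: "k * (L + 4) = k * L + 4 * k" "m * (L + 1) = m * L + m"
          "(k + m) * (L + 2) = k * L + m * L + 2 * k + 2 * m" by (simp_all add: algebra_simps)
        have lt: "sum f ?T < card ?T * (L + 2)"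
          unfolding cardT using sumT e1 cardBad mbig fb nN by linarith
        have Tpos: "0 < card ?T" using lt by (cases "card ?T") auto
        define Wl where "Wl = word_len ?P ?T (i g)"
        have avg: "avg_conj ?P ?T (i g) = real (sum f ?T) / real (card ?T)"
          unfolding avg_conj_def f_def by simp
        have "real (sum f ?T) < real (card ?T) * real (L + 2)"
          using lt by (metis of_nat_less_iff of_nat_mult)
        then have "avg_conj ?P ?T (i g) < real (L + 2)"
          unfolding avg using Tpos by (simp add: divide_less_eq mult.commute)
        then have "avg_conj ?P ?T (i g) < real Wl" using W Wl_def by linarith
        moreover have "0 < real Wl" using W Wl_def by simp
        ultimately show ?thesis unfolding curvature_def Wl_def[symmetric] by simp
      qed
    next
      fix g h assume g: "g \<in> carrier G" and h: "h \<in> carrier G"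
      obtain w where w: "length w = word_len G S (inv\<^bsub>G\<^esub> g \<otimes>\<^bsub>G\<^esub> h)" "set w \<subseteq> S"
        "wp G w = inv\<^bsub>G\<^esub> g \<otimes>\<^bsub>G\<^esub> h"
        using wl_min[OF assms, of "inv\<^bsub>G\<^esub> g \<otimes>\<^bsub>G\<^esub> h"] g h by auto
      have eq: "inv\<^bsub>?P\<^esub> (i g) \<otimes>\<^bsub>?P\<^esub> i h = (wp G w, wp ?H [])"
        using g h \<sigma>c w(3) by (simp add: i_def inv_DirProd[OF assms(1) sym_group_is_group] H.l_inv[OF \<sigma>c] del: sym_group_inv_equality)
      have "word_len ?P ?T (wp G w, wp ?H []) \<le> word_len G S (inv\<^bsub>G\<^esub> g \<otimes>\<^bsub>G\<^esub> h)"
        using up[OF w(2), of "[]"] w(1) by simp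
      moreover have "word_len G S (inv\<^bsub>G\<^esub> g \<otimes>\<^bsub>G\<^esub> h) \<le> word_len ?P ?T (wp G w, wp ?H [])"
        using lo[OF w(2), of "[]"] w(3) by simp
      ultimately show "word_dist ?P ?T (i g) (i h) = word_dist G S g h"
        unfolding word_dist_def eq by simp
    next
      fix g h assume g: "g \<in> carrier G" and h: "h \<in> carrier G"
      have eq: "inv\<^bsub>?P\<^esub> (i (g \<otimes>\<^bsub>G\<^esub> h)) \<otimes>\<^bsub>?P\<^esub> (i g \<otimes>\<^bsub>?P\<^esub> i h) = (wp G [], wp ?H w\<sigma>)"
        using g h \<sigma>c w\<sigma>(2) by (simp add: i_def inv_DirProd[OF assms(1) sym_group_is_group] H.m_assoc[symmetric] H.l_inv[OF \<sigma>c] H.inv_closed[OF \<sigma>c] del: sym_group_inv_equality)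
      show "word_dist ?P ?T (i (g \<otimes>\<^bsub>G\<^esub> h)) (i g \<otimes>\<^bsub>?P\<^esub> i h) \<le> 2"
        unfolding word_dist_def eq using up[of "[]", OF _ w\<sigma>(1)] w\<sigma>(3) by simp
    qed
  qed
qed


end
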